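(* Let $\mathcal{D}:=\{Z\in L^1:Z\ge0 \text{ a.s.},\mathbb{E}[Z]=1\}$ and let $\mathcal{Q}\subset\mathcal{D}$ be convex with $1\in\mathcal{Q}$. Define $\tilde{\mathcal{Q}}_{\max}$ as the set of all $\tilde Z\in\mathcal{Q}$ with $\tilde Z>0$ a.s. for which there exists an $L^\infty$-dense subset $\mathcal{E}$ of $\mathcal{D}\cap L^\infty$ such that for every $Z\in\mathcal{E}$ there is $\lambda\in(0,1)$ with $\lambda Z+(1-\lambda)\tilde Z\in\mathcal{Q}$. Then $\tilde{\mathcal{Q}}_{\max}$ satisfies Conditions POS, MIX and INT. Moreover, if $\tilde{\mathcal{Q}}\subset\mathcal{Q}$ satisfies Conditions POS, MIX and INT, then $\tilde{\mathcal{Q}}\subset\tilde{\mathcal{Q}}_{\max}$.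
   Context: All random variables are on a probability space $(\Omega,\mathcal{F},\mathbb{P})$. For $\tilde{\mathcal{Q}}\subset\mathcal{Q}$: Condition POS: $\tilde Z>0$ a.s. for all $\tilde Z\in\tilde{\mathcal{Q}}$. Condition MIX: $\lambda Z+(1-\lambda)\tilde Z\in\tilde{\mathcal{Q}}$ for all $Z\in\mathcal{Q}$, $\tilde Z\in\tilde{\mathcal{Q}}$ and $\lambda\in(0,1)$. Condition INT: for every $\tilde Z\in\tilde{\mathcal{Q}}$ there is an $L^\infty$-dense subset $\mathcal{E}$ of $\mathcal{D}\cap L^\infty$ such that for every $Z\in\mathcal{E}$ there is $\lambda\in(0,1)$ with $\lambda Z+(1-\lambda)\tilde Z\in\mathcal{Q}$. *)

theory Defs
  imports "HOL-Probability.Probability"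
begin

text \<open>Random variables are represented by real-valued functions on the sample space;
  all conditions are taken almost surely where the paper does so.\<close>

definition densD :: "'a measure \<Rightarrow> ('a \<Rightarrow> real) set" where
  "densD M = {Z. integrable M Z \<and> (AE x in M. Z x \<ge> 0) \<and> integral\<^sup>L M Z = 1}"

definition Linf :: "'a measure \<Rightarrow> ('a \<Rightarrow> real) set" where
  "Linf M = {Z. Z \<in> borel_measurable M \<and> (\<exists>C. AE x in M. \<bar>Z x\<bar> \<le> C)}"

definition Linf_dense :: "'a measure \<Rightarrow> ('a \<Rightarrow> real) set \<Rightarrow> ('a \<Rightarrow> real) set \<Rightarrow> bool" where
  "Linf_dense M E A \<longleftrightarrow> (\<forall>Z\<in>A. \<forall>\<epsilon>>0. \<exists>Z'\<in>E. AE x in M. \<bar>Z x - Z' x\<bar> \<le> \<epsilon>)"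

definition mixf :: "real \<Rightarrow> ('a \<Rightarrow> real) \<Rightarrow> ('a \<Rightarrow> real) \<Rightarrow> ('a \<Rightarrow> real)" where
  "mixf l Z Z' = (\<lambda>x. l * Z x + (1 - l) * Z' x)"

definition convex_fset :: "('a \<Rightarrow> real) set \<Rightarrow> bool" where
  "convex_fset Q \<longleftrightarrow> (\<forall>Z\<in>Q. \<forall>Z'\<in>Q. \<forall>l. 0 \<le> l \<and> l \<le> 1 \<longrightarrow> mixf l Z Z' \<in> Q)"

definition condPOS :: "'a measure \<Rightarrow> ('a \<Rightarrow> real) set \<Rightarrow> bool" where
  "condPOS M QT \<longleftrightarrow> (\<forall>Zt\<in>QT. AE x in M. Zt x > 0)"

definition condMIX :: "('a \<Rightarrow> real) set \<Rightarrow> ('a \<Rightarrow> real) set \<Rightarrow> bool" where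
  "condMIX Q QT \<longleftrightarrow> (\<forall>Z\<in>Q. \<forall>Zt\<in>QT. \<forall>l. 0 < l \<and> l < 1 \<longrightarrow> mixf l Z Zt \<in> QT)"

definition condINT :: "'a measure \<Rightarrow> ('a \<Rightarrow> real) set \<Rightarrow> ('a \<Rightarrow> real) set \<Rightarrow> bool" where
  "condINT M Q QT \<longleftrightarrow> (\<forall>Zt\<in>QT. \<exists>E. E \<subseteq> densD M \<inter> Linf M \<and> Linf_dense M E (densD M \<inter> Linf M) \<and>
      (\<forall>Z\<in>E. \<exists>l. 0 < l \<and> l < 1 \<and> mixf l Z Zt \<in> Q))"

definition Qmax :: "'a measure \<Rightarrow> ('a \<Rightarrow> real) set \<Rightarrow> ('a \<Rightarrow> real) set" where
  "Qmax M Q = {Zt \<in> Q. (AE x in M. Zt x > 0) \<and>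
      (\<exists>E. E \<subseteq> densD M \<inter> Linf M \<and> Linf_dense M E (densD M \<inter> Linf M) \<and>
         (\<forall>Z\<in>E. \<exists>l. 0 < l \<and> l < 1 \<and> mixf l Z Zt \<in> Q))}"

end

theory Submission
  imports Defs
begin

lemma mix_key:
  fixes l m :: real
  assumes "0 < l" "l < 1" "0 < m" "m < 1"
    and a_def: "a = (1 - l) / (1 - m * l)"
  shows "0 < a" "a < 1" "0 < a * m" "a * m < 1"
    "mixf a (mixf m W Zt) Z = mixf (a * m) W (mixf l Z Zt)"
proof -
  have ml: "m * l < 1 * l" using assms by (intro mult_strict_right_mono) auto
  have d: "0 < 1 - m * l" using ml assms by linarith
  have ml: "m * l < l" using ml by simp
  show a0: "0 < a" unfolding a_def using d assms by (intro divide_pos_pos) auto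
  show a1: "a < 1" unfolding a_def by (subst divide_less_eq_1_pos[OF d]) (use ml in linarith)
  show "0 < a * m" using a0 assms(3) by (rule mult_pos_pos)
  show "a * m < 1"
  proof -
    have "a * m < a * 1" using a0 assms using a0 assms(4) by (intro mult_strict_left_mono) auto
    then show ?thesis using a1 by linarith
  qed
  have e: "a * (1 - m * l) = 1 - l" unfolding a_def using d by simp
  show "mixf a (mixf m W Zt) Z = mixf (a * m) W (mixf l Z Zt)"
    unfolding mixf_def
  proof
    fix x
    show "a * (m * W x + (1 - m) * Zt x) + (1 - a) * Z x =
      a * m * W x + (1 - a * m) * (l * Z x + (1 - l) * Zt x)"
    proof -
      have c1: "1 - a = (1 - a*m)*l" using e by (simp add: algebra_simps)
      have c2: "a*(1-m) = (1 - a*m)*(1-l)" using e by (simp add: algebra_simps)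
      have "a * (m * W x + (1 - m) * Zt x) + (1 - a) * Z x =
        a * m * W x + (a*(1-m)) * Zt x + (1 - a) * Z x" by (simp add: algebra_simps)
      also have "\<dots> = a * m * W x + ((1 - a*m)*(1-l)) * Zt x + ((1 - a*m)*l) * Z x"
        by (simp only: c1 c2)
      also have "\<dots> = a * m * W x + (1 - a * m) * (l * Z x + (1 - l) * Zt x)"
        by (simp add: algebra_simps)
      finally show ?thesis .
    qed
  qed
qed

theorem proposition4p9:
  fixes M :: "'a measure" and Q :: "('a \<Rightarrow> real) set"
  assumes "prob_space M"
    and "Q \<subseteq> densD M" and "convex_fset Q" and "(\<lambda>_. 1) \<in> Q"
  shows "Qmax M Q \<subseteq> Q \<and> condPOS M (Qmax M Q) \<and> condMIX Q (Qmax M Q) \<and> condINT M Q (Qmax M Q) \<and>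
    (\<forall>QT. QT \<subseteq> Q \<and> condPOS M QT \<and> condMIX Q QT \<and> condINT M Q QT \<longrightarrow> QT \<subseteq> Qmax M Q)"
proof (intro conjI)
  show "Qmax M Q \<subseteq> Q" unfolding Qmax_def by auto
  show "condPOS M (Qmax M Q)" unfolding Qmax_def condPOS_def by auto
  show "condINT M Q (Qmax M Q)" unfolding Qmax_def condINT_def by auto
  show "\<forall>QT. QT \<subseteq> Q \<and> condPOS M QT \<and> condMIX Q QT \<and> condINT M Q QT \<longrightarrow> QT \<subseteq> Qmax M Q"
    unfolding Qmax_def condINT_def condPOS_def by blast
  show "condMIX Q (Qmax M Q)"
    unfolding condMIX_def
  proof (intro ballI allI impI)
    fix Z Zt and l :: real assume Z: "Z \<in> Q" and Zt: "Zt \<in> Qmax M Q" and l: "0 < l \<and> l < 1"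
    from Zt have ZtQ: "Zt \<in> Q" and pos: "AE x in M. Zt x > 0" and
      ex: "\<exists>E. E \<subseteq> densD M \<inter> Linf M \<and> Linf_dense M E (densD M \<inter> Linf M) \<and>
         (\<forall>Z\<in>E. \<exists>l. 0 < l \<and> l < 1 \<and> mixf l Z Zt \<in> Q)"
      unfolding Qmax_def by auto
    from ex obtain E where E1: "E \<subseteq> densD M \<inter> Linf M" and E2: "Linf_dense M E (densD M \<inter> Linf M)"
      and E3: "\<forall>Z\<in>E. \<exists>l. 0 < l \<and> l < 1 \<and> mixf l Z Zt \<in> Q" by blast
    have WQ: "mixf l Z Zt \<in> Q" using assms(3) Z ZtQ l unfolding convex_fset_def by auto
    have Znn: "AE x in M. Z x \<ge> 0" using Z assms(2) unfolding densD_def by auto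
    have Wpos: "AE x in M. mixf l Z Zt x > 0"
      using Znn pos
    proof eventually_elim
      case (elim x)
      then show ?case using l unfolding mixf_def
        by (simp add: add_nonneg_pos)
    qed
    have "\<forall>W\<in>E. \<exists>n. 0 < n \<and> n < 1 \<and> mixf n W (mixf l Z Zt) \<in> Q"
    proof
      fix W assume "W \<in> E"
      then obtain m where m: "0 < m" "m < 1" "mixf m W Zt \<in> Q" using E3 by blast
      define a where "a = (1 - l) / (1 - m * l)"
      have l1: "0 < l" and l2: "l < 1" using l by auto
      note k = mix_key[OF l1 l2 m(1) m(2) a_def]
      have k5: "mixf a (mixf m W Zt) Z = mixf (a*m) W (mixf l Z Zt)" by (rule k(5))
      have "mixf a (mixf m W Zt) Z \<in> Q"
        using assms(3) m(3) Z k(1,2) l unfolding convex_fset_def by auto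
      then show "\<exists>n. 0 < n \<and> n < 1 \<and> mixf n W (mixf l Z Zt) \<in> Q"
        using k k5 by metis
    qed
    then show "mixf l Z Zt \<in> Qmax M Q"
      unfolding Qmax_def using WQ Wpos E1 E2 by blast
  qed
qed

end
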